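(* In the standing setting, let $(A,B,R,\sigma)$ be a normalized context. If $\{(A_\lambda,B_\lambda,R_{A_\lambda\times B_\lambda},\sigma_{A_\lambda\times B_\lambda})\}_{\lambda\in\Lambda}$ is a decomposition of $(A,B,R,\sigma)$ into independent subcontexts, then $(\chi_{B_\lambda},\chi_{A_\lambda})\in\mathcal F_N$ for every $\lambda\in\Lambda$.
   Context: Adjoint triple: for posets $(P_1,\le_1),(P_2,\le_2),(P_3,\le_3)$, maps $\&\colon P_1\times P_2\to P_3$, $\swarrow\colon P_3\times P_2\to P_1$, $\nwarrow\colon P_3\times P_1\to P_2$ with $x\le_1 z\swarrow y \iff x\,\&\,y\le_3 z \iff y\le_2 z\nwarrow x$ for all $x,y,z$. For lower-bounded posets, $\&$ has zero-divisors if there are $x\ne\bot_1$, $y\neq\bot_2$ with $x\,\&\,y=\bot_3$. Standing setting: $(L_1,\preceq_1,\bot_1,\top_1)$ and $(L_2,\preceq_2,\bot_2,\top_2)$ are complete lattices and $(P,\le,\bot,\top)$ is a bounded poset. A multi-adjoint frame consists of adjoint triples $(\&_i,\swarrow^i,\nwarrow_i)$, $i=1,\dots,n$, with respect to $L_1,L_2,P$; a property-oriented frame consists of adjoint triples $(\&^p_j,\swarrow_p^j,\nwarrow^p_j)$, $j=1,\dots,m$, with respect to $P,L_2,L_1$; an object-oriented frame consists of adjoint triples $(\&^o_k,\swarrow_o^k,\nwarrow^o_k)$, $k=1,\dots,s$, with respect to $L_1,P,L_2$. All conjunctors $\&_i,\&^p_j,\&^o_k$ have no zero-divisors. A context $(A,B,R,\sigma)$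 consists of non-empty sets $A,B$, $R\colon A\times B\to P$, and maps $\sigma,\sigma_p,\sigma_o$ from $A\times B$ to the index sets of the three frames. It is normalized if every $a\in A$ has $b_1,b_2\in B$ with $R(a,b_1)\ne\bot$, $R(a,b_2)=\bot$, and every $b\in B$ has $a_1,a_2\in A$ with $R(a_1,b)\neq\bot$, $R(a_2,b)=\bot$. Fuzzy necessity operators: $g^{\uparrow_N}(a)=\inf\{g(b)\swarrow_o^{\sigma_o(a,b)}R(a,b)\mid b\in B\}$ for $g\in L_2^B$, and $f^{\downarrow^N}(b)=\inf\{f(a)\nwarrow^p_{\sigma_p(a,b)}R(a,b)\mid a\in A\}$ for $f\in L_1^A$. $\mathcal F_N=\{(g,f)\mid g\in L_2^B,\ f\in L_1^A,\ g^{\uparrow_N}=f,\ f^{\downarrow^N}=g\}$. For $X\subseteq B$, $\chi_X\in L_2^B$ takes value $\top_2$ on $X$ and $\bot_2$ elsewhere; for $Y\subseteq A$, $\chi_Y\in L_1^A$ takes value $\top_1$ on $Y$ and $\bot_1$ elsewhere. A separable subcontext of $(A,B,R,\sigma)$ is a tuple $(Y,X,R_{Y\times X},\sigma_{Y\times X})$ (restrictions of $R,\sigma$) with $Y\subseteq A$, $X\subseteq B$ non-empty, some $(a,b)\in Y\times X$ with $R(a,b)\ne\bot$, $R(a,b')=\bot$ for all $(a,b')\in Y\times(B\setminus X)$, and $R(a',b)=\bot$ for all $(a',b)\in(A\setminus Y)\times X$. A normalized context has a decomposition into independent subcontexts $\{(A_\lambda,B_\lambda,R_{A_\lambda\times B_\lambda},\sigma_{A_\lambda\times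 B_\lambda})\}_{\lambda\in\Lambda}$ ($\Lambda\ne\varnothing$) if each is a separable subcontext, $\{A_\lambda\}$ are pairwise disjoint with union $A$, $\{B_\lambda\}$ are pairwise disjoint with union $B$, and $\sigma$ assigns conjunctors without zero-divisors on $(A\setminus A_\lambda)\times B_\lambda$ and $A_\lambda\times(B\setminus B_\lambda)$ for all $\lambda$. *)

theory Defs
  imports Main
begin

definition adjoint_triple ::
  "('a::order \<Rightarrow> 'b::order \<Rightarrow> 'c::order) \<Rightarrow> ('c \<Rightarrow> 'b \<Rightarrow> 'a) \<Rightarrow> ('c \<Rightarrow> 'a \<Rightarrow> 'b) \<Rightarrow> bool" where
  "adjoint_triple cnj sw nw \<longleftrightarrow>
     (\<forall>x y z. (x \<le> sw z y \<longleftrightarrow> cnj x y \<le> z) \<and> (cnj x y \<le> z \<longleftrightarrow> y \<le> nw z x))"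

definition has_zero_divisors ::
  "('a::order_bot \<Rightarrow> 'b::order_bot \<Rightarrow> 'c::order_bot) \<Rightarrow> bool" where
  "has_zero_divisors cnj \<longleftrightarrow> (\<exists>x y. x \<noteq> bot \<and> y \<noteq> bot \<and> cnj x y = bot)"

definition normalized_context ::
  "'a set \<Rightarrow> 'b set \<Rightarrow> ('a \<Rightarrow> 'b \<Rightarrow> 'p::order_bot) \<Rightarrow> bool" where
  "normalized_context A B R \<longleftrightarrow>
     (\<forall>a\<in>A. \<exists>b1\<in>B. \<exists>b2\<in>B. R a b1 \<noteq> bot \<and> R a b2 = bot) \<and>
     (\<forall>b\<in>B. \<exists>a1\<in>A. \<exists>a2\<in>A. R a1 b \<noteq> bot \<and> R a2 b = bot)"

(* (Y, X, R restricted, sigma restricted) is a separable subcontext of (A,B,R,sigma) *)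
definition separable_subcontext ::
  "'a set \<Rightarrow> 'b set \<Rightarrow> ('a \<Rightarrow> 'b \<Rightarrow> 'p::order_bot) \<Rightarrow> 'a set \<Rightarrow> 'b set \<Rightarrow> bool" where
  "separable_subcontext A B R Y X \<longleftrightarrow>
     Y \<subseteq> A \<and> X \<subseteq> B \<and> Y \<noteq> {} \<and> X \<noteq> {} \<and>
     (\<exists>a\<in>Y. \<exists>b\<in>X. R a b \<noteq> bot) \<and>
     (\<forall>a\<in>Y. \<forall>b'\<in>B - X. R a b' = bot) \<and>
     (\<forall>a'\<in>A - Y. \<forall>b\<in>X. R a' b = bot)"

(* fuzzy necessity operators; the values of g (resp. f) outside B (resp. A) are irrelevant *)
definition up_N ::
  "'a set \<Rightarrow> 'b set \<Rightarrow> ('a \<Rightarrow> 'b \<Rightarrow> 'p) \<Rightarrow> ('k \<Rightarrow> 'l2 \<Rightarrow> 'p \<Rightarrow> 'l1::complete_lattice)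
   \<Rightarrow> ('a \<Rightarrow> 'b \<Rightarrow> 'k) \<Rightarrow> ('b \<Rightarrow> 'l2) \<Rightarrow> 'a \<Rightarrow> 'l1" where
  "up_N A B R swo sigma_o g a = Inf {swo (sigma_o a b) (g b) (R a b) | b. b \<in> B}"

definition down_N ::
  "'a set \<Rightarrow> 'b set \<Rightarrow> ('a \<Rightarrow> 'b \<Rightarrow> 'p) \<Rightarrow> ('j \<Rightarrow> 'l1 \<Rightarrow> 'p \<Rightarrow> 'l2::complete_lattice)
   \<Rightarrow> ('a \<Rightarrow> 'b \<Rightarrow> 'j) \<Rightarrow> ('a \<Rightarrow> 'l1) \<Rightarrow> 'b \<Rightarrow> 'l2" where
  "down_N A B R nwp sigma_p f b = Inf {nwp (sigma_p a b) (f a) (R a b) | a. a \<in> A}"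

definition in_F_N ::
  "'a set \<Rightarrow> 'b set \<Rightarrow> ('a \<Rightarrow> 'b \<Rightarrow> 'p)
   \<Rightarrow> ('j \<Rightarrow> 'l1::complete_lattice \<Rightarrow> 'p \<Rightarrow> 'l2::complete_lattice) \<Rightarrow> ('a \<Rightarrow> 'b \<Rightarrow> 'j)
   \<Rightarrow> ('k \<Rightarrow> 'l2 \<Rightarrow> 'p \<Rightarrow> 'l1) \<Rightarrow> ('a \<Rightarrow> 'b \<Rightarrow> 'k)
   \<Rightarrow> ('b \<Rightarrow> 'l2) \<Rightarrow> ('a \<Rightarrow> 'l1) \<Rightarrow> bool" where
  "in_F_N A B R nwp sigma_p swo sigma_o g f \<longleftrightarrow>
     (\<forall>a\<in>A. up_N A B R swo sigma_o g a = f a) \<and>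
     (\<forall>b\<in>B. down_N A B R nwp sigma_p f b = g b)"

definition chi :: "'x set \<Rightarrow> 'x \<Rightarrow> 'l::complete_lattice" where
  "chi X = (\<lambda>x. if x \<in> X then top else bot)"

end

theory Submission
  imports Defs
begin

lemma at_sw_top: "adjoint_triple (c::'a::order_top \<Rightarrow> 'b::order \<Rightarrow> 'c::order_top) s n \<Longrightarrow> s top y = top"
  unfolding adjoint_triple_def by (meson top.extremum top_le)
lemma at_nw_top: "adjoint_triple (c::'a::order \<Rightarrow> 'b::order_top \<Rightarrow> 'c::order_top) s n \<Longrightarrow> n top x = top"
  unfolding adjoint_triple_def by (meson top.extremum top_le)
lemma at_cnj_bot2: "adjoint_triple (c::'a::order \<Rightarrow> 'b::order_bot \<Rightarrow> 'c::order_bot) s n \<Longrightarrow> c x bot = bot"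
  unfolding adjoint_triple_def by (meson bot.extremum bot.extremum_uniqueI)
lemma at_cnj_bot1: "adjoint_triple (c::'a::order_bot \<Rightarrow> 'b::order \<Rightarrow> 'c::order_bot) s n \<Longrightarrow> c bot y = bot"
  unfolding adjoint_triple_def by (meson bot.extremum bot.extremum_uniqueI)
lemma at_sw_botbot: "adjoint_triple (c::'a::order_top \<Rightarrow> 'b::order_bot \<Rightarrow> 'c::order_bot) s n \<Longrightarrow> s bot bot = top"
  using at_cnj_bot2[of c s n] unfolding adjoint_triple_def by (metis order_refl top_le)
lemma at_nw_botbot: "adjoint_triple (c::'a::order_bot \<Rightarrow> 'b::order_top \<Rightarrow> 'c::order_bot) s n \<Longrightarrow> n bot bot = top"
  using at_cnj_bot1[of c s n] unfolding adjoint_triple_def by (metis order_refl top_le)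
lemma at_sw_bot: "adjoint_triple (c::'a::order_bot \<Rightarrow> 'b::order_bot \<Rightarrow> 'c::order_bot) s n \<Longrightarrow> \<not> has_zero_divisors c \<Longrightarrow> y \<noteq> bot \<Longrightarrow> s bot y = bot"
  unfolding adjoint_triple_def has_zero_divisors_def
proof -
  assume h: "\<forall>x y z. (x \<le> s z y) = (c x y \<le> z) \<and> (c x y \<le> z) = (y \<le> n z x)" "\<not> (\<exists>x y. x \<noteq> bot \<and> y \<noteq> bot \<and> c x y = bot)" "y \<noteq> bot"
  have "c (s bot y) y \<le> bot" using h(1) by blast
  then have "c (s bot y) y = bot" using bot_unique by blast
  then show "s bot y = bot" using h by blast
qed
lemma at_nw_bot: "adjoint_triple (c::'a::order_bot \<Rightarrow> 'b::order_bot \<Rightarrow> 'c::order_bot) s n \<Longrightarrow> \<not> has_zero_divisors c \<Longrightarrow> x \<noteq> bot \<Longrightarrow> n bot x = bot"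
  unfolding adjoint_triple_def has_zero_divisors_def
proof -
  assume h: "\<forall>x y z. (x \<le> s z y) = (c x y \<le> z) \<and> (c x y \<le> z) = (y \<le> n z x)" "\<not> (\<exists>x y. x \<noteq> bot \<and> y \<noteq> bot \<and> c x y = bot)" "x \<noteq> bot"
  have "c x (n bot x) \<le> bot" using h(1) by blast
  then have "c x (n bot x) = bot" using bot_unique by blast
  then show "n bot x = bot" using h by blast
qed

theorem mainTheorem10:
  fixes cnj :: "'i \<Rightarrow> 'l1::complete_lattice \<Rightarrow> 'l2::complete_lattice \<Rightarrow> 'p::{order_bot,order_top}"
    and sw :: "'i \<Rightarrow> 'p \<Rightarrow> 'l2 \<Rightarrow> 'l1"
    and nw :: "'i \<Rightarrow> 'p \<Rightarrow> 'l1 \<Rightarrow> 'l2"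
    and conjp :: "'j \<Rightarrow> 'p \<Rightarrow> 'l2 \<Rightarrow> 'l1"
    and swp :: "'j \<Rightarrow> 'l1 \<Rightarrow> 'l2 \<Rightarrow> 'p"
    and nwp :: "'j \<Rightarrow> 'l1 \<Rightarrow> 'p \<Rightarrow> 'l2"
    and conjo :: "'k \<Rightarrow> 'l1 \<Rightarrow> 'p \<Rightarrow> 'l2"
    and swo :: "'k \<Rightarrow> 'l2 \<Rightarrow> 'p \<Rightarrow> 'l1"
    and nwo :: "'k \<Rightarrow> 'l2 \<Rightarrow> 'l1 \<Rightarrow> 'p"
    and I :: "'i set" and J :: "'j set" and K :: "'k set"
    and A :: "'a set" and B :: "'b set" and R :: "'a \<Rightarrow> 'b \<Rightarrow> 'p"
    and sigma :: "'a \<Rightarrow> 'b \<Rightarrow> 'i" and sigma_p :: "'a \<Rightarrow> 'b \<Rightarrow> 'j"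
    and sigma_o :: "'a \<Rightarrow> 'b \<Rightarrow> 'k"
    and Lam :: "'lam set" and Al :: "'lam \<Rightarrow> 'a set" and Bl :: "'lam \<Rightarrow> 'b set"
  assumes frames_finite: "finite I" "I \<noteq> {}" "finite J" "J \<noteq> {}" "finite K" "K \<noteq> {}"
    and multi_adjoint_frame: "\<forall>i\<in>I. adjoint_triple (cnj i) (sw i) (nw i)"
    and property_frame: "\<forall>j\<in>J. adjoint_triple (conjp j) (swp j) (nwp j)"
    and object_frame: "\<forall>k\<in>K. adjoint_triple (conjo k) (swo k) (nwo k)"
    and no_zd: "\<forall>i\<in>I. \<not> has_zero_divisors (cnj i)"
               "\<forall>j\<in>J. \<not> has_zero_divisors (conjp j)"
               "\<forall>k\<in>K. \<not> has_zero_divisors (conjo k)"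
    and ctxt_ok: "A \<noteq> {}" "B \<noteq> {}"
      "\<forall>a\<in>A. \<forall>b\<in>B. sigma a b \<in> I \<and> sigma_p a b \<in> J \<and> sigma_o a b \<in> K"
    and normalized: "normalized_context A B R"
    and decomposition:
      "Lam \<noteq> {}"
      "\<forall>l\<in>Lam. separable_subcontext A B R (Al l) (Bl l)"
      "\<forall>l\<in>Lam. \<forall>l'\<in>Lam. l \<noteq> l' \<longrightarrow> Al l \<inter> Al l' = {} \<and> Bl l \<inter> Bl l' = {}"
      "(\<Union>l\<in>Lam. Al l) = A" "(\<Union>l\<in>Lam. Bl l) = B"
      "\<forall>l\<in>Lam. \<forall>(a,b)\<in>((A - Al l) \<times> Bl l) \<union> (Al l \<times> (B - Bl l)).
         \<not> has_zero_divisors (cnj (sigma a b)) \<and>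
         \<not> has_zero_divisors (conjp (sigma_p a b)) \<and>
         \<not> has_zero_divisors (conjo (sigma_o a b))"
  shows "\<forall>l\<in>Lam. in_F_N A B R nwp sigma_p swo sigma_o (chi (Bl l)) (chi (Al l))"
proof
  fix l assume l: "l \<in> Lam"
  have sep: "separable_subcontext A B R (Al l) (Bl l)" using decomposition(2) l by blast
  have up: "up_N A B R swo sigma_o (chi (Bl l)) a = chi (Al l) a" if a: "a \<in> A" for a
  proof (cases "a \<in> Al l")
    case True
    have "\<forall>b\<in>B. swo (sigma_o a b) (chi (Bl l) b) (R a b) = top"
    proof
      fix b assume b: "b \<in> B"
      have adj: "adjoint_triple (conjo (sigma_o a b)) (swo (sigma_o a b)) (nwo (sigma_o a b))"
        using object_frame ctxt_ok(3) a b by blast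
      show "swo (sigma_o a b) (chi (Bl l) b) (R a b) = top"
      proof (cases "b \<in> Bl l")
        case True then show ?thesis using at_sw_top[OF adj] by (simp add: chi_def)
      next
        case False
        then have "R a b = bot" using sep True b unfolding separable_subcontext_def by blast
        then show ?thesis using False at_sw_botbot[OF adj] by (simp add: chi_def)
      qed
    qed
    then have "\<forall>x\<in>{swo (sigma_o a b) (chi (Bl l) b) (R a b) |b. b \<in> B}. x = top" by blast
    then show ?thesis using True unfolding up_N_def chi_def
      by (simp add: Inf_top_conv(1))
  next
    case False
    obtain b1 where b1: "b1 \<in> B" "R a b1 \<noteq> bot" using normalized a unfolding normalized_context_def by blast
    have "b1 \<notin> Bl l" using sep False a b1 unfolding separable_subcontext_def by blast
    have adj: "adjoint_triple (conjo (sigma_o a b1)) (swo (sigma_o a b1)) (nwo (sigma_o a b1))"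
      using object_frame ctxt_ok(3) a b1 by blast
    have nz: "\<not> has_zero_divisors (conjo (sigma_o a b1))" using no_zd(3) ctxt_ok(3) a b1 by blast
    have "swo (sigma_o a b1) (chi (Bl l) b1) (R a b1) = bot"
      using at_sw_bot[OF adj nz b1(2)] \<open>b1 \<notin> Bl l\<close> by (simp add: chi_def)
    then have "up_N A B R swo sigma_o (chi (Bl l)) a \<le> bot" unfolding up_N_def
      by (metis (mono_tags, lifting) Inf_lower b1(1) mem_Collect_eq)
    then show ?thesis using False by (simp add: chi_def bot_unique)
  qed
  have down: "down_N A B R nwp sigma_p (chi (Al l)) b = chi (Bl l) b" if b: "b \<in> B" for b
  proof (cases "b \<in> Bl l")
    case True
    have "\<forall>a\<in>A. nwp (sigma_p a b) (chi (Al l) a) (R a b) = top"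
    proof
      fix a assume a: "a \<in> A"
      have adj: "adjoint_triple (conjp (sigma_p a b)) (swp (sigma_p a b)) (nwp (sigma_p a b))"
        using property_frame ctxt_ok(3) a b by blast
      show "nwp (sigma_p a b) (chi (Al l) a) (R a b) = top"
      proof (cases "a \<in> Al l")
        case True then show ?thesis using at_nw_top[OF adj] by (simp add: chi_def)
      next
        case False
        then have "R a b = bot" using sep True a unfolding separable_subcontext_def by blast
        then show ?thesis using False at_nw_botbot[OF adj] by (simp add: chi_def)
      qed
    qed
    then have "\<forall>x\<in>{nwp (sigma_p a b) (chi (Al l) a) (R a b) |a. a \<in> A}. x = top" by blast
    then show ?thesis using True unfolding down_N_def chi_def
      by (simp add: Inf_top_conv(1))
  next
    case False
    obtain a1 where a1: "a1 \<in> A" "R a1 b \<noteq> bot" using normalized b unfolding normalized_context_def by blast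
    have "a1 \<notin> Al l" using sep False b a1 unfolding separable_subcontext_def by blast
    have adj: "adjoint_triple (conjp (sigma_p a1 b)) (swp (sigma_p a1 b)) (nwp (sigma_p a1 b))"
      using property_frame ctxt_ok(3) a1 b by blast
    have nz: "\<not> has_zero_divisors (conjp (sigma_p a1 b))" using no_zd(2) ctxt_ok(3) a1 b by blast
    have "nwp (sigma_p a1 b) (chi (Al l) a1) (R a1 b) = bot"
      using at_nw_bot[OF adj nz a1(2)] \<open>a1 \<notin> Al l\<close> by (simp add: chi_def)
    then have "down_N A B R nwp sigma_p (chi (Al l)) b \<le> bot" unfolding down_N_def
      by (metis (mono_tags, lifting) Inf_lower a1(1) mem_Collect_eq)
    then show ?thesis using False by (simp add: chi_def bot_unique)
  qed
  show "in_F_N A B R nwp sigma_p swo sigma_o (chi (Bl l)) (chi (Al l))"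
    unfolding in_F_N_def using up down by blast
qed

end
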